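(* For every integer $n > 3$, there exists a permutation $p$ of $\{1,2,\ldots,n\}$ such that the number of distinct patterns contained in $p$ is greater than $\dfrac{2^{\,n - 2\sqrt{n}}}{\sqrt{n}}$.
   Context: Two sequences of distinct integers $q = q_1 q_2 \cdots q_k$ and $r = r_1 r_2 \cdots r_k$ of the same length are identically ordered if for all $i,j$, $q_i < q_j \iff r_i < r_j$. For a permutation $p = p_1 p_2 \cdots p_n$, a subsequence is $p_{i_1} p_{i_2}\cdots p_{i_k}$ with $i_1 < i_2 < \cdots < i_k$. A permutation $p$ contains a pattern $q$ (a permutation of $\{1,\ldots,k\}$) if some subsequence of $p$ of length $k$ is identically ordered with $q$. The number of distinct patterns contained in $p$ is the number of permutations $q$ (of any length $k \ge 0$ or $k\ge 1$) contained in $p$. *)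

theory Defs
  imports Complex_Main
begin

text \<open>Permutations of {1..n} are represented as lists (one-line notation).\<close>

definition is_perm_of :: "nat \<Rightarrow> nat list \<Rightarrow> bool" where
  "is_perm_of n p \<longleftrightarrow> distinct p \<and> set p = {1..n}"

definition ident_ordered :: "nat list \<Rightarrow> nat list \<Rightarrow> bool" where
  "ident_ordered q r \<longleftrightarrow> length q = length r \<and>
     (\<forall>i < length q. \<forall>j < length q. (q ! i < q ! j \<longleftrightarrow> r ! i < r ! j))"

definition contains :: "nat list \<Rightarrow> nat list \<Rightarrow> bool" where
  "contains p q \<longleftrightarrow> is_perm_of (length q) q \<and>
     (\<exists>I. I \<subseteq> {..<length p} \<and> card I = length q \<and> ident_ordered (nths p I) q)"

definition patterns :: "nat list \<Rightarrow> nat list set" where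
  "patterns p = {q. q \<noteq> [] \<and> contains p q}"

end

theory Submission imports Defs begin


definition stdz :: "nat list \<Rightarrow> nat list" where
  "stdz x = map (\<lambda>v. card {w \<in> set x. w \<le> v}) x"

lemma rank_less_iff:
  fixes x :: "nat list"
  assumes "v \<in> set x" "v' \<in> set x"
  shows "card {w \<in> set x. w \<le> v} < card {w \<in> set x. w \<le> v'} \<longleftrightarrow> v < v'"
proof
  assume "v < v'"
  then have "{w \<in> set x. w \<le> v} \<subseteq> {w \<in> set x. w \<le> v'}" by auto
  moreover have "v' \<notin> {w \<in> set x. w \<le> v}" using \<open>v < v'\<close> by auto
  moreover have "v' \<in> {w \<in> set x. w \<le> v'}" using assms by auto
  ultimately have "{w \<in> set x. w \<le> v} \<subset> {w \<in> set x. w \<le> v'}" by blast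
  then show "card {w \<in> set x. w \<le> v} < card {w \<in> set x. w \<le> v'}"
    by (simp add: psubset_card_mono)
next
  assume h: "card {w \<in> set x. w \<le> v} < card {w \<in> set x. w \<le> v'}"
  show "v < v'"
  proof (rule ccontr)
    assume "\<not> v < v'"
    then have "{w \<in> set x. w \<le> v'} \<subseteq> {w \<in> set x. w \<le> v}" by auto
    then have "card {w \<in> set x. w \<le> v'} \<le> card {w \<in> set x. w \<le> v}"
      by (simp add: card_mono)
    then show False using h by simp
  qed
qed

lemma stdz_len[simp]: "length (stdz x) = length x"
  by (simp add: stdz_def)

lemma stdz_io: "ident_ordered (stdz x) x"
  unfolding ident_ordered_def
proof (intro conjI allI impI)
  show "length (stdz x) = length x" by simp
next
  fix i j assume i: "i < length (stdz x)" and j: "j < length (stdz x)"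
  then have "i < length x" "j < length x" by auto
  then show "(stdz x ! i < stdz x ! j) = (x ! i < x ! j)"
    unfolding stdz_def using rank_less_iff[OF nth_mem nth_mem] by simp
qed

lemma io_sym: "ident_ordered x y \<Longrightarrow> ident_ordered y x"
  unfolding ident_ordered_def by auto

lemma io_trans: "ident_ordered x y \<Longrightarrow> ident_ordered y z \<Longrightarrow> ident_ordered x z"
  unfolding ident_ordered_def by auto

lemma stdz_perm:
  assumes "distinct x"
  shows "is_perm_of (length x) (stdz x)"
proof -
  have d: "distinct (stdz x)"
    unfolding distinct_conv_nth
  proof (intro allI impI)
    fix i j assume ij: "i < length (stdz x)" "j < length (stdz x)" "i \<noteq> j"
    then have "x ! i \<noteq> x ! j" using assms by (simp add: nth_eq_iff_index_eq)
    then have "x ! i < x ! j \<or> x ! j < x ! i" by auto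
    then show "stdz x ! i \<noteq> stdz x ! j"
      using stdz_io[of x] ij unfolding ident_ordered_def by (metis less_irrefl stdz_len)
  qed
  have sub: "set (stdz x) \<subseteq> {1..length x}"
  proof
    fix r assume "r \<in> set (stdz x)"
    then obtain v where v: "v \<in> set x" "r = card {w \<in> set x. w \<le> v}"
      by (auto simp: stdz_def)
    have "v \<in> {w \<in> set x. w \<le> v}" using v by auto
    moreover have "finite {w \<in> set x. w \<le> v}" by simp
    ultimately have "card {w \<in> set x. w \<le> v} > 0" using card_gt_0_iff by blast
    then have "r \<ge> 1" using v by simp
    moreover have "r \<le> card (set x)" using v by (simp add: card_mono)
    moreover have "card (set x) = length x" using assms by (simp add: distinct_card)
    ultimately show "r \<in> {1..length x}" by simp
  qed
  have "card (set (stdz x)) = length x" using d by (simp add: distinct_card)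
  then have "set (stdz x) = {1..length x}" using sub
    by (intro card_subset_eq) auto
  then show ?thesis using d unfolding is_perm_of_def by simp
qed

lemma nths_as_map: "nths xs I = map (nth xs) (filter (\<lambda>i. i \<in> I) [0..<length xs])"
proof (induction xs rule: rev_induct)
  case Nil then show ?case by simp
next
  case (snoc x xs)
  then show ?case by (auto simp: nths_append nth_append)
qed

lemma io_nths: "ident_ordered x y \<Longrightarrow> ident_ordered (nths x I) (nths y I)"
proof -
  assume h: "ident_ordered x y"
  define L where "L = filter (\<lambda>i. i \<in> I) [0..<length y]"
  have lx: "length x = length y" using h unfolding ident_ordered_def by simp
  have b: "\<And>i. i < length L \<Longrightarrow> L ! i < length y"
    proof -
    fix i assume "i < length L"
    then have "L ! i \<in> set L" by (rule nth_mem)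
    then show "L ! i < length y" unfolding L_def by simp
  qed
  have "\<forall>i<length L. \<forall>j<length L. (x ! (L!i) < x ! (L!j)) = (y ! (L!i) < y ! (L!j))"
    using h b lx unfolding ident_ordered_def by auto
  then show ?thesis unfolding ident_ordered_def nths_as_map lx L_def[symmetric] by simp
qed

lemma contains_std:
  assumes "distinct p" "I \<subseteq> {..<length p}"
  shows "contains p (stdz (nths p I))"
proof -
  have "{i. i < length p \<and> i \<in> I} = I" using assms(2) by auto
  then have "length (nths p I) = card I" by (simp add: length_nths)
  then show ?thesis unfolding contains_def using assms stdz_perm[of "nths p I"] stdz_io io_sym
    by auto
qed


definition tv :: "nat \<Rightarrow> nat \<Rightarrow> nat \<Rightarrow> nat" where
  "tv n a i = (if i mod Suc a = a then 4*n*n + i else 2*((i mod Suc a)*n + i div Suc a) + 1)"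
definition sepv :: "nat \<Rightarrow> nat \<Rightarrow> nat" where
  "sepv n g = 2*(g+1)*n"
definition Rl :: "nat \<Rightarrow> nat \<Rightarrow> nat list" where
  "Rl n a = map (sepv n) [0..<a] @ map (tv n a) [0..<n-a]"
definition isH :: "nat \<Rightarrow> nat list \<Rightarrow> nat \<Rightarrow> bool" where
  "isH a u t = (a \<le> t \<and> u!(a-1) < u!t)"
definition dec :: "nat \<Rightarrow> nat list \<Rightarrow> (nat \<times> nat) set" where
  "dec a u = {(card {t'. a \<le> t' \<and> t' < t \<and> isH a u t'}, card {g. g < a \<and> u!g < u!t}) | t.
      a \<le> t \<and> t < length u \<and> \<not> isH a u t}"

lemma dec_io:
  assumes "ident_ordered u v"
  shows "dec a u = dec a v"
proof -
  have l: "length u = length v" using assms unfolding ident_ordered_def by simp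
  have c: "\<And>i j. i < length u \<Longrightarrow> j < length u \<Longrightarrow> (u!i < u!j) = (v!i < v!j)"
    using assms unfolding ident_ordered_def by simp
  have h: "\<And>t. t < length u \<Longrightarrow> isH a u t = isH a v t"
    unfolding isH_def using c by (metis diff_le_self le_less_trans)
  have e1: "\<And>t. t < length u \<Longrightarrow> {t'. a \<le> t' \<and> t' < t \<and> isH a u t'} = {t'. a \<le> t' \<and> t' < t \<and> isH a v t'}"
    using h by auto
  have e2: "\<And>t. a \<le> t \<Longrightarrow> t < length u \<Longrightarrow> {g. g < a \<and> u!g < u!t} = {g. g < a \<and> v!g < v!t}"
    using c by auto
  show ?thesis unfolding dec_def using e1 e2 h l by (metis (no_types, lifting))
qed

lemma cnt: "card {i. i < x \<and> i mod Suc a = a} = x div Suc a"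
proof (induction x)
  case 0 then show ?case by simp
next
  case (Suc x)
  have e: "{i. i < Suc x \<and> i mod Suc a = a} = {i. i < x \<and> i mod Suc a = a} \<union> (if x mod Suc a = a then {x} else {})"
    by (auto simp: less_Suc_eq)
  have d: "Suc x div Suc a = x div Suc a + (if x mod Suc a = a then 1 else 0)"
    by (simp add: div_Suc mod_Suc)
  show ?case using Suc e d by (auto simp: card_insert_if)
qed


lemma reindex:
  fixes Ls :: "nat list"
  assumes s: "sorted_wrt (<) Ls" and j: "j < length Ls"
    and H: "\<And>i. i < Ls!j \<Longrightarrow> Q i \<Longrightarrow> i \<in> set Ls"
  shows "card {j'. j' < j \<and> Q (Ls!j')} = card {i. i < Ls!j \<and> Q i}"
proof -
  have inj: "inj_on (nth Ls) {j'. j' < j \<and> Q (Ls!j')}"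
    using s j by (auto simp: inj_on_def) (metis linorder_neqE_nat order_less_irrefl sorted_wrt_nth_less order.strict_trans)
  have img: "nth Ls ` {j'. j' < j \<and> Q (Ls!j')} = {i. i < Ls!j \<and> Q i}"
  proof (intro set_eqI iffI)
    fix i assume "i \<in> nth Ls ` {j'. j' < j \<and> Q (Ls!j')}"
    then obtain j' where "j' < j" "Q (Ls!j')" "i = Ls!j'" by auto
    then show "i \<in> {i. i < Ls!j \<and> Q i}" using s j by (simp add: sorted_wrt_nth_less)
  next
    fix i assume "i \<in> {i. i < Ls!j \<and> Q i}"
    then have i: "i < Ls!j" "Q i" by auto
    then have "i \<in> set Ls" using H by auto
    then obtain j' where j': "j' < length Ls" "Ls!j' = i" by (auto simp: in_set_conv_nth)
    have "j' < j"
    proof (rule ccontr)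
      assume "\<not> j' < j"
      then have "j = j' \<or> j < j'" by auto
      then have "Ls!j \<le> Ls!j'" using s j' by (auto dest: sorted_wrt_nth_less)
      then show False using i j' by simp
    qed
    then show "i \<in> nth Ls ` {j'. j' < j \<and> Q (Ls!j')}" using j' i by auto
  qed
  show ?thesis using card_image[OF inj] img by simp
qed

lemma sep_less_iff:
  fixes n g r q :: nat
  assumes "q < n"
  shows "2*(g+1)*n < 2*(r*n+q)+1 \<longleftrightarrow> g < r"
proof
  assume h: "2*(g+1)*n < 2*(r*n+q)+1"
  show "g < r"
  proof (rule ccontr)
    assume "\<not> g < r"
    then have "(r+1)*n \<le> (g+1)*n" by (intro mult_le_mono1) simp
    then have "r*n + n \<le> g*n + n" by (simp add: algebra_simps)
    moreover have "2*g*n + 2*n < 2*r*n + 2*q + 1" using h by (simp add: algebra_simps)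
    ultimately show False using assms by linarith
  qed
next
  assume "g < r"
  then have "(g+1)*n \<le> r*n" by (intro mult_le_mono1) simp
  then show "2*(g+1)*n < 2*(r*n+q)+1" by (simp add: algebra_simps)
qed

lemma free_bound:
  fixes n a r q :: nat
  assumes "q < n" "r < a"
  shows "2*(r*n+q)+1 < 2*a*n"
proof -
  have "(r+1)*n \<le> a*n" using assms by (intro mult_le_mono1) simp
  then show ?thesis using assms by (simp add: algebra_simps)
qed


lemma nths_upt: "nths [0..<m] J = filter (\<lambda>i. i \<in> J) [0..<m]"
proof -
  have "map ((!) [0..<m]) (filter (\<lambda>i. i \<in> J) [0..<m]) = map id (filter (\<lambda>i. i \<in> J) [0..<m])"
    by (rule map_cong) auto
  then show ?thesis by (simp add: nths_as_map)
qed

lemma key: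
  assumes a1: "1 \<le> a" and an: "a \<le> n" and S: "S \<subseteq> {i. i < n-a \<and> i mod Suc a \<noteq> a}"
  shows "dec a (nths (Rl n a) ({..<a} \<union> (\<lambda>i. a+i) ` (S \<union> {i. i < n-a \<and> i mod Suc a = a})))
          = (\<lambda>i. (i div Suc a, i mod Suc a)) ` S"
proof -
  define H where "H = {i. i < n-a \<and> i mod Suc a = a}"
  define I where "I = {..<a} \<union> (\<lambda>i. a+i) ` (S \<union> H)"
  define Ls where "Ls = filter (\<lambda>i. i \<in> S \<union> H) [0..<n-a]"
  define u where "u = map (sepv n) [0..<a] @ map (tv n a) Ls"
  have n1: "n \<ge> 1" using a1 an by simp
  have J: "{j. j + length (map (sepv n) [0..<a]) \<in> I} = S \<union> H"
    unfolding I_def by auto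
  have "nths (Rl n a) I = u"
    unfolding Rl_def nths_append J u_def Ls_def nths_map nths_upt
    by (simp add: nths_all I_def)
  moreover have ul: "length u = a + length Ls" unfolding u_def by simp
  have u1: "\<And>g. g < a \<Longrightarrow> u!g = sepv n g" unfolding u_def by (simp add: nth_append)
  have u2: "\<And>j. j < length Ls \<Longrightarrow> u!(a+j) = tv n a (Ls!j)" unfolding u_def by (simp add: nth_append)
  have setLs: "set Ls = S \<union> H" unfolding Ls_def H_def using S by auto
  have srt: "sorted_wrt (<) Ls" unfolding Ls_def by (simp add: sorted_wrt_filter)
  have Lsb: "\<And>j. j < length Ls \<Longrightarrow> Ls!j < n - a"
  proof -
    fix j assume "j < length Ls"
    then have "Ls!j \<in> S \<union> H" using setLs nth_mem by blast
    then show "Ls!j < n - a" using S unfolding H_def by blast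
  qed
  have ua: "u!(a-1) = 2*a*n" using u1[of "a-1"] a1 by (simp add: sepv_def)
  have isHj: "\<And>j. j < length Ls \<Longrightarrow> isH a u (a+j) \<longleftrightarrow> Ls!j mod Suc a = a"
  proof -
    fix j assume j: "j < length Ls"
    define x where "x = Ls!j"
    have xn: "x < n" using Lsb[OF j] x_def by simp
    show "isH a u (a+j) \<longleftrightarrow> Ls!j mod Suc a = a"
    proof (cases "x mod Suc a = a")
      case True
      have "2*a*n \<le> 2*n*n" using an by simp
      moreover have "0 < 2*n*n" using n1 by simp
      ultimately have "2*a*n < 4*n*n + x" by linarith
      then show ?thesis unfolding isH_def using True u2[OF j] ua x_def by (simp add: tv_def)
    next
      case False
      have r: "x mod Suc a < a" using False by (metis less_Suc_eq mod_less_divisor zero_less_Suc)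
      have q: "x div Suc a < n" using xn by (meson div_le_dividend le_less_trans)
      have "2*((x mod Suc a)*n + x div Suc a)+1 < 2*a*n" by (rule free_bound[OF q r])
      then show ?thesis unfolding isH_def using False u2[OF j] ua x_def by (simp add: tv_def)
    qed
  qed
  have vcj: "\<And>j. j < length Ls \<Longrightarrow> Ls!j mod Suc a \<noteq> a \<Longrightarrow>
      card {g. g < a \<and> u!g < u!(a+j)} = Ls!j mod Suc a"
  proof -
    fix j assume j: "j < length Ls" and nh: "Ls!j mod Suc a \<noteq> a"
    define x where "x = Ls!j"
    have xn: "x < n" using Lsb[OF j] x_def by simp
    have r: "x mod Suc a < a" using nh x_def by (metis less_Suc_eq mod_less_divisor zero_less_Suc)
    have q: "x div Suc a < n" using xn by (meson div_le_dividend le_less_trans)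
    have "{g. g < a \<and> u!g < u!(a+j)} = {..<x mod Suc a}"
      using u1 u2[OF j] nh x_def sep_less_iff[OF q] r
      by (auto simp: tv_def sepv_def)
    then show "card {g. g < a \<and> u!g < u!(a+j)} = Ls!j mod Suc a" using x_def by simp
  qed
  have pcj: "\<And>j. j < length Ls \<Longrightarrow>
      card {t'. a \<le> t' \<and> t' < a+j \<and> isH a u t'} = Ls!j div Suc a"
  proof -
    fix j assume j: "j < length Ls"
    have "{t'. a \<le> t' \<and> t' < a+j \<and> isH a u t'} = (\<lambda>i. a+i) ` {j'. j' < j \<and> Ls!j' mod Suc a = a}"
    proof (intro set_eqI iffI)
      fix t assume "t \<in> {t'. a \<le> t' \<and> t' < a+j \<and> isH a u t'}"
      then have t: "a \<le> t" "t < a + j" "isH a u t" by auto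
      then have "isH a u (a + (t-a))" by simp
      then have "Ls!(t-a) mod Suc a = a" using isHj[of "t-a"] t j by simp
      then show "t \<in> (\<lambda>i. a+i) ` {j'. j' < j \<and> Ls!j' mod Suc a = a}"
        using t by (intro image_eqI[of _ _ "t-a"]) auto
    next
      fix t assume "t \<in> (\<lambda>i. a+i) ` {j'. j' < j \<and> Ls!j' mod Suc a = a}"
      then obtain j' where "j' < j" "Ls!j' mod Suc a = a" "t = a + j'" by auto
      then show "t \<in> {t'. a \<le> t' \<and> t' < a+j \<and> isH a u t'}" using isHj[of j'] j by auto
    qed
    then have "card {t'. a \<le> t' \<and> t' < a+j \<and> isH a u t'} = card {j'. j' < j \<and> Ls!j' mod Suc a = a}"
      by (simp add: card_image)
    also have "\<dots> = card {i. i < Ls!j \<and> i mod Suc a = a}"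
    proof (rule reindex[OF srt j])
      fix i assume "i < Ls!j" "i mod Suc a = a"
      then show "i \<in> set Ls" using Lsb[OF j] setLs unfolding H_def by auto
    qed
    also have "\<dots> = Ls!j div Suc a" by (rule cnt)
    finally show "card {t'. a \<le> t' \<and> t' < a+j \<and> isH a u t'} = Ls!j div Suc a" .
  qed
  have "dec a u = (\<lambda>i. (i div Suc a, i mod Suc a)) ` S"
  proof (intro set_eqI iffI)
    fix z assume "z \<in> dec a u"
    then obtain t where t: "a \<le> t" "t < length u" "\<not> isH a u t"
      "z = (card {t'. a \<le> t' \<and> t' < t \<and> isH a u t'}, card {g. g < a \<and> u!g < u!t})"
      unfolding dec_def by auto
    define j where "j = t - a"
    have tj: "t = a + j" using t j_def by simp
    have j: "j < length Ls" using t ul j_def by simp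
    have nh: "Ls!j mod Suc a \<noteq> a" using isHj[OF j] t tj by simp
    have "Ls!j \<in> S" using nth_mem[OF j] setLs nh unfolding H_def by auto
    moreover have "z = (Ls!j div Suc a, Ls!j mod Suc a)" using t tj pcj[OF j] vcj[OF j nh] by simp
    ultimately show "z \<in> (\<lambda>i. (i div Suc a, i mod Suc a)) ` S" by auto
  next
    fix z assume "z \<in> (\<lambda>i. (i div Suc a, i mod Suc a)) ` S"
    then obtain i where i: "i \<in> S" "z = (i div Suc a, i mod Suc a)" by auto
    then have "i \<in> set Ls" using setLs by auto
    then obtain j where j: "j < length Ls" "Ls!j = i" by (auto simp: in_set_conv_nth)
    have nh: "Ls!j mod Suc a \<noteq> a" using i S j by auto
    have "z = (card {t'. a \<le> t' \<and> t' < a+j \<and> isH a u t'}, card {g. g < a \<and> u!g < u!(a+j)})"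
      using pcj[OF j(1)] vcj[OF j(1) nh] i j by simp
    moreover have "\<not> isH a u (a+j)" using isHj[OF j(1)] nh by simp
    ultimately show "z \<in> dec a u" unfolding dec_def using j ul by force
  qed
  ultimately show ?thesis unfolding I_def H_def by simp
qed


lemma len_Rl: "a \<le> n \<Longrightarrow> length (Rl n a) = n"
  by (simp add: Rl_def)

lemma distinct_Rl:
  assumes a1: "1 \<le> a" and an: "a \<le> n"
  shows "distinct (Rl n a)"
proof -
  have n1: "n \<ge> 1" using a1 an by simp
  have d1: "distinct (map (sepv n) [0..<a])"
    using n1 by (auto simp: distinct_map inj_on_def sepv_def)
  have free_lt: "\<And>i. i < n \<Longrightarrow> i mod Suc a \<noteq> a \<Longrightarrow> tv n a i < 2*a*n"
  proof -
    fix i assume i: "i < n" "i mod Suc a \<noteq> a"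
    have r: "i mod Suc a < a" using i by (metis less_Suc_eq mod_less_divisor zero_less_Suc)
    have q: "i div Suc a < n" using i by (meson div_le_dividend le_less_trans)
    show "tv n a i < 2*a*n" using free_bound[OF q r] i by (simp add: tv_def)
  qed
  have big: "2*a*n < 4*n*n"
  proof -
    have "2*a*n \<le> 2*n*n" using an by simp
    moreover have "0 < 2*n*n" using n1 by simp
    ultimately show ?thesis by linarith
  qed
  have d2: "inj_on (tv n a) {0..<n-a}"
  proof (rule inj_onI)
    fix i j assume i: "i \<in> {0..<n-a}" and j: "j \<in> {0..<n-a}" and e: "tv n a i = tv n a j"
    have iN: "i < n" "j < n" using i j by auto
    show "i = j"
    proof (cases "i mod Suc a = a"; cases "j mod Suc a = a")
      assume "i mod Suc a = a" "j mod Suc a = a" then show ?thesis using e by (simp add: tv_def)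
    next
      assume h: "i mod Suc a = a" "j mod Suc a \<noteq> a"
      then show ?thesis using e free_lt[OF iN(2)] big by (simp add: tv_def)
    next
      assume h: "i mod Suc a \<noteq> a" "j mod Suc a = a"
      then show ?thesis using e free_lt[OF iN(1)] big by (simp add: tv_def)
    next
      assume h: "i mod Suc a \<noteq> a" "j mod Suc a \<noteq> a"
      have qi: "i div Suc a < n" using iN by (meson div_le_dividend le_less_trans)
      have qj: "j div Suc a < n" using iN by (meson div_le_dividend le_less_trans)
      have ee: "(i mod Suc a)*n + i div Suc a = (j mod Suc a)*n + j div Suc a"
        using e h by (simp add: tv_def)
      have "((i mod Suc a)*n + i div Suc a) div n = i mod Suc a"
        using qi by simp
      moreover have "((j mod Suc a)*n + j div Suc a) div n = j mod Suc a"
        using qj by simp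
      moreover have "((i mod Suc a)*n + i div Suc a) mod n = i div Suc a"
        using qi by simp
      moreover have "((j mod Suc a)*n + j div Suc a) mod n = j div Suc a"
        using qj by simp
      ultimately have "i mod Suc a = j mod Suc a" "i div Suc a = j div Suc a" using ee by metis+
      then show ?thesis by (metis div_mult_mod_eq)
    qed
  qed
  have disj: "set (map (sepv n) [0..<a]) \<inter> set (map (tv n a) [0..<n-a]) = {}"
  proof (rule ccontr)
    assume "set (map (sepv n) [0..<a]) \<inter> set (map (tv n a) [0..<n-a]) \<noteq> {}"
    then obtain g i where g: "g < a" and i: "i < n - a" and e: "sepv n g = tv n a i" by auto
    have "(g+1)*n \<le> a*n" using g by (intro mult_le_mono1) simp
    then have "sepv n g \<le> 2*a*n" unfolding sepv_def by simp
    show False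
    proof (cases "i mod Suc a = a")
      case True
      then show False using e \<open>sepv n g \<le> 2*a*n\<close> big by (simp add: tv_def)
    next
      case False
      then have "odd (tv n a i)" by (simp add: tv_def)
      moreover have "even (sepv n g)" by (simp add: sepv_def)
      ultimately show False using e by simp
    qed
  qed
  show ?thesis unfolding Rl_def using d1 d2 disj by (simp add: distinct_map)
qed

lemma numeric:
  fixes n :: nat
  assumes "n > 3"
  defines "s \<equiv> nat \<lfloor>sqrt (real n)\<rfloor>"
  shows "1 \<le> s + 1" "s + 1 \<le> n"
    "real ((n - (s+1)) - (n - (s+1)) div Suc (s+1)) \<ge> real n - 2 * sqrt (real n)"
proof -
  have sq0: "sqrt (real n) \<ge> 0" by simp
  have sl: "real s \<le> sqrt (real n)" unfolding s_def using sq0 by linarith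
  have su: "sqrt (real n) < real s + 1" unfolding s_def using sq0 by linarith
  have "(2::real)^2 \<le> real n" using assms by simp
  then have sq2: "sqrt (real n) \<ge> 2" by (rule real_le_rsqrt)
  then have s2: "s \<ge> 2" using su by linarith
  have "real s * real s \<le> sqrt (real n) * sqrt (real n)" by (rule mult_mono[OF sl sl]) simp_all
  then have "real (s*s) \<le> real n" by simp
  then have ssn: "s*s \<le> n" by linarith
  have "sqrt (real n) * sqrt (real n) < (real s + 1) * (real s + 1)"
    using su sq0 by (meson mult_strict_mono' order_refl) 
  then have "real n < real ((s+1)*(s+1))" by (simp add: algebra_simps)
  then have nlt: "n < (s+1)*(s+1)" by linarith
  show "1 \<le> s + 1" by simp
  have "2*s \<le> s*s" using s2 by (intro mult_le_mono1)
  then show "s + 1 \<le> n" using ssn s2 by linarith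
  have "n - (s+1) < s * Suc (s+1)" using nlt s2 by (simp add: algebra_simps)
  then have d: "(n - (s+1)) div Suc (s+1) < s" by (simp add: div_less_iff_less_mult)
  have "(n - (s+1)) - (n - (s+1)) div Suc (s+1) \<ge> n - 2*s" using d by linarith
  then have "real ((n - (s+1)) - (n - (s+1)) div Suc (s+1)) \<ge> real n - 2 * real s" by linarith
  then show "real ((n - (s+1)) - (n - (s+1)) div Suc (s+1)) \<ge> real n - 2 * sqrt (real n)"
    using sl by linarith
qed


lemma main_count:
  assumes a1: "1 \<le> a" and an: "a \<le> n"
  shows "\<exists>p. is_perm_of n p \<and> card (patterns p) \<ge> 2 ^ ((n-a) - (n-a) div Suc a)"
proof -
  define R where "R = Rl n a"
  define p where "p = stdz R"
  have dR: "distinct R" unfolding R_def using distinct_Rl[OF a1 an] .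
  have lR: "length R = n" unfolding R_def using len_Rl[OF an] .
  have perm: "is_perm_of n p" unfolding p_def using stdz_perm[OF dR] lR by simp
  have lp: "length p = n" unfolding p_def using lR by simp
  have dp: "distinct p" using perm unfolding is_perm_of_def by simp
  define H where "H = {i. i < n-a \<and> i mod Suc a = a}"
  define F where "F = {i. i < n-a \<and> i mod Suc a \<noteq> a}"
  define I where "I = (\<lambda>S. {..<a} \<union> (\<lambda>i. a+i) ` (S \<union> H))"
  define \<Phi> where "\<Phi> = (\<lambda>S. stdz (nths p (I S)))"
  have Isub: "\<And>S. S \<subseteq> F \<Longrightarrow> I S \<subseteq> {..<length p}"
    unfolding I_def F_def H_def lp using an by auto
  have inP: "\<And>S. S \<subseteq> F \<Longrightarrow> \<Phi> S \<in> patterns p"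
  proof -
    fix S assume S: "S \<subseteq> F"
    have c: "contains p (\<Phi> S)" unfolding \<Phi>_def using contains_std[OF dp Isub[OF S]] .
    have "0 \<in> I S" "0 < length p" unfolding I_def using a1 an lp by auto
    then have "p!0 \<in> set (nths p (I S))" by (auto simp: set_nths)
    then have "\<Phi> S \<noteq> []" unfolding \<Phi>_def by (metis empty_iff length_0_conv list.set(1) stdz_len)
    then show "\<Phi> S \<in> patterns p" using c unfolding patterns_def by simp
  qed
  have decPhi: "\<And>S. S \<subseteq> F \<Longrightarrow> dec a (\<Phi> S) = (\<lambda>i. (i div Suc a, i mod Suc a)) ` S"
  proof -
    fix S assume S: "S \<subseteq> F"
    have "dec a (\<Phi> S) = dec a (nths p (I S))" unfolding \<Phi>_def by (rule dec_io[OF stdz_io])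
    also have "\<dots> = dec a (nths R (I S))" unfolding p_def by (rule dec_io[OF io_nths[OF stdz_io]])
    also have "\<dots> = (\<lambda>i. (i div Suc a, i mod Suc a)) ` S"
      unfolding R_def I_def H_def using key[OF a1 an] S unfolding F_def by blast
    finally show "dec a (\<Phi> S) = (\<lambda>i. (i div Suc a, i mod Suc a)) ` S" .
  qed
  have injc: "inj (\<lambda>i. (i div Suc a, i mod Suc a))"
    by (rule injI) (metis div_mult_mod_eq prod.inject)
  have inj: "inj_on \<Phi> (Pow F)"
  proof (rule inj_onI)
    fix S S' assume S: "S \<in> Pow F" and S': "S' \<in> Pow F" and e: "\<Phi> S = \<Phi> S'"
    have "(\<lambda>i. (i div Suc a, i mod Suc a)) ` S = (\<lambda>i. (i div Suc a, i mod Suc a)) ` S'"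
      using decPhi[of S] decPhi[of S'] S S' e by simp
    then show "S = S'" using injc by (simp add: inj_image_eq_iff)
  qed
  have fin: "finite (patterns p)"
  proof (rule finite_subset)
    show "patterns p \<subseteq> {xs. set xs \<subseteq> {..n} \<and> length xs \<le> n}"
    proof
      fix q assume "q \<in> patterns p"
      then have c: "contains p q" unfolding patterns_def by simp
      then obtain J where J: "J \<subseteq> {..<length p}" "card J = length q"
        unfolding contains_def by blast
      have "card J \<le> card {..<length p}" using J(1) by (intro card_mono) simp_all
      then have lq: "length q \<le> n" using J lp by simp
      have "set q = {1..length q}" using c unfolding contains_def is_perm_of_def by simp
      then have "set q \<subseteq> {..n}" using lq by auto
      then show "q \<in> {xs. set xs \<subseteq> {..n} \<and> length xs \<le> n}" using lq by simp
    qed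
    show "finite {xs. set xs \<subseteq> {..n} \<and> length xs \<le> n}"
      by (rule finite_lists_length_le) simp
  qed
  have "card (Pow F) \<le> card (patterns p)"
    using card_inj_on_le[OF inj _ fin] inP by auto
  moreover have "card F = (n-a) - (n-a) div Suc a"
  proof -
    have "F = {..<n-a} - H" unfolding F_def H_def by auto
    moreover have "H \<subseteq> {..<n-a}" unfolding H_def by auto
    ultimately have "card F = card {..<n-a} - card H"
      by (metis card_Diff_subset finite_lessThan finite_subset)
    moreover have "card H = (n-a) div Suc a" unfolding H_def by (rule cnt)
    ultimately show ?thesis by simp
  qed
  moreover have "finite F" unfolding F_def by simp
  ultimately show ?thesis using perm by (auto simp: card_Pow)
qed

theorem theorem1:
  fixes n :: nat
  assumes "n > 3"
  shows "\<exists>p. is_perm_of n p \<and>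
           real (card (patterns p)) > 2 powr (real n - 2 * sqrt (real n)) / sqrt (real n)"
proof -
  define s where "s = nat \<lfloor>sqrt (real n)\<rfloor>"
  note num = numeric[OF assms, folded s_def]
  define c where "c = (n - (s+1)) - (n - (s+1)) div Suc (s+1)"
  obtain p where p: "is_perm_of n p" "card (patterns p) \<ge> 2 ^ c"
    using main_count[OF num(1) num(2)] unfolding c_def by blast
  have "sqrt (real n) > 1" using assms by simp
  have pos: "2 powr (real n - 2 * sqrt (real n)) > 0" by simp
  have "2 powr (real n - 2 * sqrt (real n)) / sqrt (real n) < 2 powr (real n - 2 * sqrt (real n))"
    using pos \<open>sqrt (real n) > 1\<close> by (simp add: divide_less_eq)
  also have "\<dots> \<le> 2 powr (real c)" using num(3) unfolding c_def by simp
  also have "\<dots> = real (2 ^ c)" by (simp add: powr_realpow)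
  also have "\<dots> \<le> real (card (patterns p))" using p(2) by linarith
  finally show ?thesis using p(1) by blast
qed

end
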